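(* Consider a firm with managers $i=1,\dots,n$, each with skill $s_i\in(0,1]$, and parameters $A>0$, $\alpha\in(0,1)$, $c_0>0$, $\gamma>0$, $\beta\ge 0$. Fix a worker allocation: manager $i$ supervises a team of $n_i\ge 0$ workers, the workers $j$ having skills $q_j>0$, and let $Q_i=\sum_{j\in\text{team}_i} q_j$; assume at least one team is nonempty. For agent capital $K_A\ge 0$ define $$c_i(K_A)=\frac{c_0}{1+\gamma K_A s_i^{\beta}},\qquad L_{\text{eff},i}(K_A)=\frac{Q_i}{1+c_i(K_A)\,n_i},\qquad Y_i(K_A)=A\,L_{\text{eff},i}(K_A)^{\alpha},\qquad Y(K_A)=\sum_{i=1}^n Y_i(K_A).$$ Then, holding the team allocations $\{n_i,\text{team}_i\}$ fixed, $\partial Y/\partial K_A>0$ for all $K_A\ge 0$, i.e. output is strictly increasing in $K_A$.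
   Context: $K_A$ ("agent capital") is a nonnegative real number representing AI capability that reduces coordination costs; $c_i(K_A)$ is manager $i$'s per-worker coordination cost, $L_{\text{eff},i}$ is the effective labor of team $i$, and $Y_i$ is team $i$'s output (each team has exactly one manager). *)

theory Defs
  imports "HOL-Analysis.Analysis"
begin

definition coord_cost :: "real \<Rightarrow> real \<Rightarrow> real \<Rightarrow> real \<Rightarrow> real \<Rightarrow> real" where
  "coord_cost c0 \<gamma> \<beta> s K = c0 / (1 + \<gamma> * K * s powr \<beta>)"

definition eff_labor :: "real \<Rightarrow> nat \<Rightarrow> real \<Rightarrow> real" where
  "eff_labor Q ni c = Q / (1 + c * real ni)"

definition firm_output ::
  "nat \<Rightarrow> real \<Rightarrow> real \<Rightarrow> real \<Rightarrow> real \<Rightarrow> real \<Rightarrow> (nat \<Rightarrow> real)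
   \<Rightarrow> (nat \<Rightarrow> 'w set) \<Rightarrow> ('w \<Rightarrow> real) \<Rightarrow> real \<Rightarrow> real" where
  "firm_output n A \<alpha> c0 \<gamma> \<beta> s team q K =
     (\<Sum>i<n. A * (eff_labor (\<Sum>j\<in>team i. q j) (card (team i))
                             (coord_cost c0 \<gamma> \<beta> (s i) K)) powr \<alpha>)"

end

theory Submission imports Defs begin
lemma term_deriv:
  fixes Q m b c0 \<gamma> A \<alpha> K :: real
  assumes "Q > 0" "m > 0" "b > 0" "c0 > 0" "\<gamma> > 0" "K \<ge> 0" "A > 0" "\<alpha> > 0"
  shows "\<exists>D>0. ((\<lambda>K. A * (Q / (1 + c0 / (1 + \<gamma> * K * b) * m)) powr \<alpha>) has_real_derivative D) (at K)"
proof -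
  define u where "u = 1 + \<gamma> * K * b"
  have u: "u > 0" using assms unfolding u_def by (simp add: add_pos_nonneg)
  define h where "h = 1 + c0 / u * m"
  have h: "h > 0" using assms u unfolding h_def by (simp add: add_pos_pos)
  have dc: "((\<lambda>K. c0 / (1 + \<gamma> * K * b)) has_real_derivative (- (c0 * (\<gamma> * b)) / u^2)) (at K)"
    unfolding u_def
    by (rule derivative_eq_intros refl | use u in \<open>simp add: u_def power2_eq_square\<close>)+
  have dh: "((\<lambda>K. 1 + c0 / (1 + \<gamma> * K * b) * m) has_real_derivative (- (c0 * (\<gamma> * b)) / u^2 * m)) (at K)"
    using dc u by (auto intro!: derivative_eq_intros simp: u_def power2_eq_square)
  have dL: "((\<lambda>K. Q / (1 + c0 / (1 + \<gamma> * K * b) * m)) has_real_derivative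
      (Q * (c0 * (\<gamma> * b) / u^2 * m) / h^2)) (at K)"
    using DERIV_divide[OF DERIV_const[of Q] dh] h unfolding h_def u_def
    by (simp add: power2_eq_square)
  have Lpos: "Q / h > 0" using assms h by simp
  have dT: "((\<lambda>K. A * (Q / (1 + c0 / (1 + \<gamma> * K * b) * m)) powr \<alpha>) has_real_derivative
      A * (\<alpha> * (Q/h) powr (\<alpha> - 1) * (Q * (c0 * (\<gamma> * b) / u^2 * m) / h^2))) (at K)"
  proof (rule DERIV_cmult)
    have "Q / (1 + c0 / (1 + \<gamma> * K * b) * m) = Q / h" unfolding h_def u_def by simp
    note e = this
    show "((\<lambda>K. (Q / (1 + c0 / (1 + \<gamma> * K * b) * m)) powr \<alpha>) has_real_derivative
      \<alpha> * (Q/h) powr (\<alpha> - 1) * (Q * (c0 * (\<gamma> * b) / u^2 * m) / h^2)) (at K)"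
      using DERIV_fun_powr[OF dL, of \<alpha>] Lpos unfolding e by simp
  qed
  moreover have "A * (\<alpha> * (Q/h) powr (\<alpha> - 1) * (Q * (c0 * (\<gamma> * b) / u^2 * m) / h^2)) > 0"
    using assms h u Lpos by (intro mult_pos_pos divide_pos_pos) auto
  ultimately show ?thesis by blast
qed

lemma all_deriv:
  fixes n :: nat and A \<alpha> c0 \<gamma> \<beta> :: real
    and s :: "nat \<Rightarrow> real" and team :: "nat \<Rightarrow> 'w set" and q :: "'w \<Rightarrow> real"
  assumes "\<forall>i<n. 0 < s i \<and> s i \<le> 1"
    and "A > 0" and "0 < \<alpha>" and "\<alpha> < 1" and "c0 > 0" and "\<gamma> > 0" and "\<beta> \<ge> 0"
    and "\<forall>i<n. finite (team i)"
    and "\<forall>i<n. \<forall>j\<in>team i. q j > 0"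
    and "\<exists>i<n. team i \<noteq> {}"
    and K: "K \<ge> 0"
  shows "\<exists>D>0. (firm_output n A \<alpha> c0 \<gamma> \<beta> s team q has_real_derivative D) (at K)"
proof -
  define T where "T i K = A * (eff_labor (\<Sum>j\<in>team i. q j) (card (team i))
                             (coord_cost c0 \<gamma> \<beta> (s i) K)) powr \<alpha>" for i K
  have F: "firm_output n A \<alpha> c0 \<gamma> \<beta> s team q = (\<lambda>K. \<Sum>i<n. T i K)"
    unfolding firm_output_def T_def by (rule ext) simp
  have each: "\<exists>D. (T i has_real_derivative D) (at K) \<and> D \<ge> 0 \<and> (team i \<noteq> {} \<longrightarrow> D > 0)"
    if i: "i < n" for i
  proof (cases "team i = {}")
    case True
    then have "T i = (\<lambda>K. 0)" unfolding T_def eff_labor_def by (rule_tac ext) simp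
    then show ?thesis using True by (auto intro: DERIV_const)
  next
    case False
    have fin: "finite (team i)" using assms i by auto
    have Q: "(\<Sum>j\<in>team i. q j) > 0" using fin False assms(9) i
      by (intro sum_pos) auto
    have m: "real (card (team i)) > 0" using fin False by (simp add: card_gt_0_iff)
    have "s i > 0" using assms(1) i by blast
    then have b: "s i powr \<beta> > 0" by simp
    have eq: "T i = (\<lambda>K. A * ((\<Sum>j\<in>team i. q j) / (1 + c0 / (1 + \<gamma> * K * (s i powr \<beta>)) * real (card (team i)))) powr \<alpha>)"
      unfolding T_def eff_labor_def coord_cost_def by (rule ext) simp
    obtain D where "D > 0" "(T i has_real_derivative D) (at K)"
      using term_deriv[OF Q m b assms(5) assms(6) K assms(2) assms(3)] unfolding eq by blast
    then show ?thesis by auto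
  qed
  then obtain Df where Df: "\<And>i. i < n \<Longrightarrow> (T i has_real_derivative Df i) (at K) \<and> Df i \<ge> 0 \<and> (team i \<noteq> {} \<longrightarrow> Df i > 0)"
    by metis
  have d: "((\<lambda>K. \<Sum>i<n. T i K) has_real_derivative (\<Sum>i<n. Df i)) (at K)"
    by (rule DERIV_sum) (use Df in auto)
  obtain i0 where i0: "i0 < n" "team i0 \<noteq> {}" using assms by blast
  have "(\<Sum>i<n. Df i) > 0"
  proof -
    have "Df i0 \<le> (\<Sum>i<n. Df i)"
      by (rule member_le_sum) (use Df i0 in auto)
    moreover have "Df i0 > 0" using Df i0 by auto
    ultimately show ?thesis by linarith
  qed
  then show ?thesis using d F by auto
qed

theorem proposition1:
  fixes n :: nat and A \<alpha> c0 \<gamma> \<beta> :: real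
    and s :: "nat \<Rightarrow> real" and team :: "nat \<Rightarrow> 'w set" and q :: "'w \<Rightarrow> real"
  assumes "\<forall>i<n. 0 < s i \<and> s i \<le> 1"
    and "A > 0" and "0 < \<alpha>" and "\<alpha> < 1" and "c0 > 0" and "\<gamma> > 0" and "\<beta> \<ge> 0"
    and "\<forall>i<n. finite (team i)"
    and "\<forall>i<n. \<forall>k<n. i \<noteq> k \<longrightarrow> team i \<inter> team k = {}"
    and "\<forall>i<n. \<forall>j\<in>team i. q j > 0"
    and "\<exists>i<n. team i \<noteq> {}"
  shows "(\<forall>K\<ge>0. \<exists>D>0. (firm_output n A \<alpha> c0 \<gamma> \<beta> s team q has_real_derivative D)
                           (at K within {0..}))
         \<and> strict_mono_on {0..} (firm_output n A \<alpha> c0 \<gamma> \<beta> s team q)"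
proof -
  have AD: "\<And>K. K \<ge> 0 \<Longrightarrow> \<exists>D>0. (firm_output n A \<alpha> c0 \<gamma> \<beta> s team q has_real_derivative D) (at K)"
    using all_deriv[OF assms(1-8) assms(10,11)] by blast
  show ?thesis
  proof
    show "\<forall>K\<ge>0. \<exists>D>0. (firm_output n A \<alpha> c0 \<gamma> \<beta> s team q has_real_derivative D) (at K within {0..})"
      using AD has_field_derivative_at_within by blast
    show "strict_mono_on {0..} (firm_output n A \<alpha> c0 \<gamma> \<beta> s team q)"
    proof (rule strict_mono_onI)
      fix x y :: real assume "x \<in> {0..}" "y \<in> {0..}" "x < y"
      then show "firm_output n A \<alpha> c0 \<gamma> \<beta> s team q x < firm_output n A \<alpha> c0 \<gamma> \<beta> s team q y"
        proof (intro DERIV_pos_imp_increasing[OF \<open>x < y\<close>])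
          fix z assume "x \<le> z" "z \<le> y"
          then have "z \<ge> 0" using \<open>x \<in> {0..}\<close> by simp
          then show "\<exists>D. (firm_output n A \<alpha> c0 \<gamma> \<beta> s team q has_real_derivative D) (at z) \<and> D > 0"
            using AD by blast
        qed
    qed
  qed
qed
end
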